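(* Let $X$ and $Y$ be independent nonnegative random variables with distributions $F$ and $G$, where $F$ has unbounded support, and let $H$ be the distribution of $XY$. If $G^{*k}\in\mathcal L$ for some integer $k\ge1$, then for every constant $d>0$, $$\overline G(x/d)-\overline G\big((x+1)/d\big)=o\big(\overline H(x)\big)\quad\text{as }x\to\infty.$$
   Context: For a distribution $V$, $\overline V=1-V$ denotes its tail, and $V^{*k}$ denotes the $k$-fold convolution of $V$ with itself (the distribution of the sum of $k$ independent copies). All limits are as $x\to\infty$; $f(x)\sim g(x)$ means $f(x)/g(x)\to1$ and $f(x)=o(g(x))$ means $f(x)/g(x)\to0$. A distribution $V$ is long-tailed, written $V\in\mathcal L$, if $\overline V(x)>0$ for all $x$ and $\overline V(x-t)\sim\overline V(x)$ for every real $t$. *)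

theory Defs
  imports "HOL-Probability.Probability" "HOL-Probability.Convolution" "HOL-Library.Landau_Symbols"
begin

definition real_distribution :: "real measure \<Rightarrow> bool" where
  "real_distribution V \<longleftrightarrow> prob_space V \<and> sets V = sets borel"

definition tail :: "real measure \<Rightarrow> real \<Rightarrow> real" where
  "tail V x = 1 - measure V {..x}"

fun conv_pow :: "real measure \<Rightarrow> nat \<Rightarrow> real measure" where
  "conv_pow V 0 = return borel 0"
| "conv_pow V (Suc k) = convolution V (conv_pow V k)"

definition long_tailed :: "real measure \<Rightarrow> bool" where
  "long_tailed V \<longleftrightarrow> (\<forall>x. tail V x > 0) \<and>
     (\<forall>t::real. (\<lambda>x. tail V (x - t)) \<sim>[at_top] (\<lambda>x. tail V x))"

definition nonneg_distribution :: "real measure \<Rightarrow> bool" where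
  "nonneg_distribution V \<longleftrightarrow> real_distribution V \<and> measure V {..<0} = 0"

definition prod_distribution :: "real measure \<Rightarrow> real measure \<Rightarrow> real measure" where
  "prod_distribution F G = distr (F \<Otimes>\<^sub>M G) borel (\<lambda>(x, y). x * y)"

end

theory Submission imports Defs begin

lemma rd_space: "real_distribution V \<Longrightarrow> space V = UNIV"
  unfolding real_distribution_def by (metis sets_eq_imp_space_eq space_borel)

lemma rd_sets: "real_distribution V \<Longrightarrow> A \<in> sets borel \<Longrightarrow> A \<in> sets V"
  unfolding real_distribution_def by simp

lemma rd_pair:
  assumes "real_distribution M" "real_distribution N"
  shows "pair_prob_space M N"
  using assms unfolding real_distribution_def
  by (simp add: pair_prob_space_def pair_sigma_finite_def prob_space_imp_sigma_finite)

lemma rd_conv: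
  assumes "real_distribution M" "real_distribution N"
  shows "real_distribution (convolution M N)"
proof -
  interpret pair_prob_space M N using rd_pair[OF assms] .
  have s: "sets (M \<Otimes>\<^sub>M N) = sets (borel \<Otimes>\<^sub>M borel)"
    using assms by (intro sets_pair_measure_cong) (auto simp: real_distribution_def)
  have "(\<lambda>(x, y). x + y) \<in> borel_measurable (borel \<Otimes>\<^sub>M (borel::real measure))" by measurable
  then have "(\<lambda>(x, y). x + y) \<in> borel_measurable (M \<Otimes>\<^sub>M N)"
    by (subst measurable_cong_sets[OF s refl])
  then show ?thesis unfolding real_distribution_def convolution_def
    by (auto intro!: prob_space_distr)
qed

lemma rd_conv_pow:
  assumes "real_distribution G"
  shows "real_distribution (conv_pow G m)"
proof (induction m)
  case 0
  then show ?case unfolding real_distribution_def by (simp add: prob_space_return)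
next
  case (Suc m)
  then show ?case using rd_conv[OF assms] by simp
qed

lemma pair_rect:
  assumes "real_distribution M" "real_distribution N" "A \<in> sets borel" "B \<in> sets borel"
  shows "measure (M \<Otimes>\<^sub>M N) (A \<times> B) = measure M A * measure N B"
proof -
  interpret pair_prob_space M N using rd_pair[OF assms(1,2)] .
  have "A \<in> sets M" "B \<in> sets N" using assms rd_sets by auto
  then show ?thesis
    by (simp add: measure_def M2.emeasure_pair_measure_Times enn2real_mult)
qed

lemma conv_measure:
  assumes "real_distribution M" "real_distribution N" "A \<in> sets borel"
  shows "measure (convolution M N) A = measure (M \<Otimes>\<^sub>M N) {p. fst p + snd p \<in> A}"
proof -
  interpret pair_prob_space M N using rd_pair[OF assms(1,2)] .
  have sp: "space (M \<Otimes>\<^sub>M N) = UNIV" using assms by (simp add: space_pair_measure rd_space)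
  have "measure (convolution M N) A = measure (M \<Otimes>\<^sub>M N) ((\<lambda>(x, y). x + y) -` A \<inter> space (M \<Otimes>\<^sub>M N))"
    unfolding convolution_def using assms
    by (intro measure_distr) (auto simp: real_distribution_def)
  also have "(\<lambda>(x, y). x + y) -` A \<inter> space (M \<Otimes>\<^sub>M N) = {p. fst p + snd p \<in> A}"
    using sp by auto
  finally show ?thesis .
qed

lemma tail_eq: "real_distribution V \<Longrightarrow> tail V x = measure V {x<..}"
proof -
  assume a: "real_distribution V"
  then interpret prob_space V by (simp add: real_distribution_def)
  have "measure V (space V - {..x}) = 1 - measure V {..x}"
    using a by (intro prob_compl) (simp add: rd_sets)
  moreover have "space V - {..x} = {x<..}" using rd_space[OF a] by auto
  ultimately show ?thesis by (simp add: tail_def)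
qed

lemma tail_diff:
  assumes "real_distribution V" "a \<le> b"
  shows "tail V a - tail V b = measure V {a<..b}"
proof -
  interpret prob_space V using assms by (simp add: real_distribution_def)
  have "measure V ({..a} \<union> {a<..b}) = measure V {..a} + measure V {a<..b}"
    using assms by (intro finite_measure_Union) (auto simp: rd_sets)
  moreover have "{..a} \<union> {a<..b} = {..b}" using assms by auto
  ultimately show ?thesis by (simp add: tail_def)
qed

lemma plus_meas:
  assumes "real_distribution M" "real_distribution N" "A \<in> sets borel"
  shows "{p. fst p + snd p \<in> A} \<in> sets (M \<Otimes>\<^sub>M N)"
proof -
  have s: "sets (M \<Otimes>\<^sub>M N) = sets (borel \<Otimes>\<^sub>M borel)"
    using assms by (intro sets_pair_measure_cong) (auto simp: real_distribution_def)
  have "(\<lambda>(x, y). x + y) \<in> borel_measurable (borel \<Otimes>\<^sub>M (borel::real measure))" by measurable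
  then have m: "(\<lambda>(x, y). x + y) \<in> borel_measurable (M \<Otimes>\<^sub>M N)"
    by (subst measurable_cong_sets[OF s refl])
  have sp: "space (M \<Otimes>\<^sub>M N) = UNIV" using assms by (simp add: space_pair_measure rd_space)
  have "(\<lambda>(x, y). x + y) -` A \<inter> space (M \<Otimes>\<^sub>M N) \<in> sets (M \<Otimes>\<^sub>M N)"
    using measurable_sets[OF m assms(3)] .
  moreover have "(\<lambda>(x, y). x + y) -` A \<inter> space (M \<Otimes>\<^sub>M N) = {p. fst p + snd p \<in> A}"
    using sp by auto
  ultimately show ?thesis by simp
qed

lemma conv_union_bound:
  assumes "real_distribution M" "real_distribution N"
  shows "tail (convolution M N) (a + b) \<le> tail M a + tail N b"
proof -
  interpret pair_prob_space M N using rd_pair[OF assms(1,2)] .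
  have u: "measure M UNIV = 1" "measure N UNIV = 1"
    using rd_space[OF assms(1)] rd_space[OF assms(2)] M1.prob_space M2.prob_space by metis+
  have "tail (convolution M N) (a + b) = measure (M \<Otimes>\<^sub>M N) {p. fst p + snd p \<in> {a+b<..}}"
    using assms by (simp add: tail_eq rd_conv conv_measure)
  also have "\<dots> \<le> measure (M \<Otimes>\<^sub>M N) ({a<..} \<times> UNIV \<union> UNIV \<times> {b<..})"
    using assms by (intro finite_measure_mono) (auto simp: rd_sets)
  also have "\<dots> \<le> measure (M \<Otimes>\<^sub>M N) ({a<..} \<times> UNIV) + measure (M \<Otimes>\<^sub>M N) (UNIV \<times> {b<..})"
    using assms by (intro measure_subadditive) (auto simp: rd_sets)
  also have "\<dots> = tail M a + tail N b"
    using assms u by (simp add: pair_rect tail_eq)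
  finally show ?thesis .
qed

lemma conv_lower:
  assumes "real_distribution M" "real_distribution N" "0 \<le> h" "0 \<le> a"
  shows "measure M {y<..y+h} * measure N {-a..a} \<le> measure (convolution M N) {y-a<..y+h+a}"
proof -
  interpret pair_prob_space M N using rd_pair[OF assms(1,2)] .
  have "measure M {y<..y+h} * measure N {-a..a} = measure (M \<Otimes>\<^sub>M N) ({y<..y+h} \<times> {-a..a})"
    using assms by (simp add: pair_rect)
  also have "\<dots> \<le> measure (M \<Otimes>\<^sub>M N) {p. fst p + snd p \<in> {y-a<..y+h+a}}"
    using assms by (intro finite_measure_mono plus_meas) auto
  also have "\<dots> = measure (convolution M N) {y-a<..y+h+a}"
    using assms by (simp add: conv_measure)
  finally show ?thesis .
qed

lemma conv_pow_tail:
  assumes "real_distribution G"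
  shows "tail (conv_pow G m) (real m * z) \<le> real m * tail G z"
proof (induction m)
  case 0
  then show ?case by (simp add: tail_def measure_return)
next
  case (Suc m)
  have "tail (conv_pow G (Suc m)) (real (Suc m) * z) = tail (convolution G (conv_pow G m)) (z + real m * z)"
    by (simp add: algebra_simps)
  also have "\<dots> \<le> tail G z + tail (conv_pow G m) (real m * z)"
    by (intro conv_union_bound assms rd_conv_pow)
  also have "\<dots> \<le> real (Suc m) * tail G z" using Suc by (simp add: algebra_simps)
  finally show ?case .
qed

lemma times_measure:
  assumes "real_distribution M" "real_distribution N" "A \<in> sets borel"
  shows "real_distribution (prod_distribution M N)"
    and "measure (prod_distribution M N) A = measure (M \<Otimes>\<^sub>M N) {p. fst p * snd p \<in> A}"
    and "{p. fst p * snd p \<in> A} \<in> sets (M \<Otimes>\<^sub>M N)"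
proof -
  interpret pair_prob_space M N using rd_pair[OF assms(1,2)] .
  have s: "sets (M \<Otimes>\<^sub>M N) = sets (borel \<Otimes>\<^sub>M borel)"
    using assms by (intro sets_pair_measure_cong) (auto simp: real_distribution_def)
  have "(\<lambda>(x, y). x * y) \<in> borel_measurable (borel \<Otimes>\<^sub>M (borel::real measure))" by measurable
  then have m: "(\<lambda>(x, y). x * y) \<in> borel_measurable (M \<Otimes>\<^sub>M N)"
    by (subst measurable_cong_sets[OF s refl])
  then show "real_distribution (prod_distribution M N)" unfolding real_distribution_def prod_distribution_def
    by (auto intro!: prob_space_distr)
  have sp: "space (M \<Otimes>\<^sub>M N) = UNIV" using assms by (simp add: space_pair_measure rd_space)
  have e: "(\<lambda>(x, y). x * y) -` A \<inter> space (M \<Otimes>\<^sub>M N) = {p. fst p * snd p \<in> A}"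
    using sp by auto
  have "(\<lambda>(x, y). x * y) -` A \<inter> space (M \<Otimes>\<^sub>M N) \<in> sets (M \<Otimes>\<^sub>M N)"
    using measurable_sets[OF m assms(3)] .
  then show "{p. fst p * snd p \<in> A} \<in> sets (M \<Otimes>\<^sub>M N)" using e by simp
  have "measure (prod_distribution M N) A = measure (M \<Otimes>\<^sub>M N) ((\<lambda>(x, y). x * y) -` A \<inter> space (M \<Otimes>\<^sub>M N))"
    unfolding prod_distribution_def using assms m by (intro measure_distr) auto
  then show "measure (prod_distribution M N) A = measure (M \<Otimes>\<^sub>M N) {p. fst p * snd p \<in> A}"
    using e by simp
qed

lemma H_lower:
  assumes "real_distribution F" "real_distribution G" "c > 0" "x > 0"
  shows "measure F {c<..} * tail G (x / c) \<le> tail (prod_distribution F G) x"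
proof -
  interpret pair_prob_space F G using rd_pair[OF assms(1,2)] .
  have "measure F {c<..} * tail G (x / c) = measure (F \<Otimes>\<^sub>M G) ({c<..} \<times> {x/c<..})"
    using assms by (simp add: pair_rect tail_eq)
  also have "\<dots> \<le> measure (F \<Otimes>\<^sub>M G) {p. fst p * snd p \<in> {x<..}}"
  proof (intro finite_measure_mono times_measure(3)[OF assms(1,2)])
    show "{c<..} \<times> {x / c<..} \<subseteq> {p. fst p * snd p \<in> {x<..}}"
    proof
      fix p assume "p \<in> {c<..} \<times> {x / c<..}"
      then obtain u v where p: "p = (u, v)" and uv: "c < u" "x / c < v" by auto
      have "v > 0" using uv assms by (smt (verit) divide_pos_pos)
      have "x = c * (x / c)" using assms by simp
      also have "\<dots> < c * v" using uv assms by (intro mult_strict_left_mono) auto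
      also have "\<dots> < u * v" using uv \<open>v > 0\<close> by simp
      finally show "p \<in> {p. fst p * snd p \<in> {x<..}}" using p by simp
    qed
  qed auto
  also have "\<dots> = tail (prod_distribution F G) x"
    using tail_eq[OF times_measure(1)[OF assms(1,2) borel_open[OF open_greaterThan]], of x] times_measure(2)[OF assms(1,2), of "{x<..}"]
    by simp
  finally show ?thesis .
qed

lemma exists_pos_interval:
  assumes "real_distribution T"
  shows "\<exists>a\<ge>0. measure T {-a..a} > 0"
proof (rule ccontr)
  assume "\<not> ?thesis"
  then have z: "\<And>n::nat. measure T {-real n..real n} = 0"
    by (metis of_nat_0_le_iff measure_nonneg order_less_le)
  interpret prob_space T using assms by (simp add: real_distribution_def)
  have "(\<Union>n::nat. {-real n..real n}) \<in> null_sets T"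
    using z assms by (intro null_sets_UN) (auto simp: rd_sets null_sets_def emeasure_eq_measure)
  moreover have "(\<Union>n::nat. {-real n..real n}) = space T"
  proof -
    have "\<And>x::real. \<exists>n::nat. \<bar>x\<bar> \<le> real n" by (meson real_arch_simple)
    then show ?thesis using rd_space[OF assms] by (auto simp: abs_le_iff) (metis minus_le_iff)
  qed
  ultimately show False by (metis emeasure_space_1 null_setsD1 zero_neq_one)
qed

lemma lt_diff:
  assumes "long_tailed S" "real_distribution S" "e > 0"
  shows "eventually (\<lambda>y. tail S (y - a) - tail S (y + b) \<le> e * tail S y) at_top"
proof -
  from assms have 1: "(\<lambda>y. tail S (y - a)) \<sim>[at_top] tail S"
    and 2: "(\<lambda>y. tail S (y - (-b))) \<sim>[at_top] tail S" unfolding long_tailed_def by blast+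
  have o1: "(\<lambda>y. tail S (y - a) - tail S y) \<in> o(tail S)"
    using asymp_equiv_altdef[THEN iffD1, OF 1] by simp
  have o2: "(\<lambda>y. tail S (y - (-b)) - tail S y) \<in> o(tail S)"
    using asymp_equiv_altdef[THEN iffD1, OF 2] by simp
  have e1: "eventually (\<lambda>y. norm (tail S (y - a) - tail S y) \<le> e/2 * norm (tail S y)) at_top"
    using landau_o.smallD[OF o1, of "e/2"] assms by simp
  have e2: "eventually (\<lambda>y. norm (tail S (y - (-b)) - tail S y) \<le> e/2 * norm (tail S y)) at_top"
    using landau_o.smallD[OF o2, of "e/2"] assms by simp
  have nn: "\<And>y. tail S y \<ge> 0" using tail_eq[OF assms(2)] by simp
  show ?thesis
    using eventually_conj[OF e1 e2]
  proof (rule eventually_mono)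
    fix y assume "norm (tail S (y - a) - tail S y) \<le> e/2 * norm (tail S y) \<and>
        norm (tail S (y - (-b)) - tail S y) \<le> e/2 * norm (tail S y)"
    then show "tail S (y - a) - tail S (y + b) \<le> e * tail S y"
      using nn[of y] by (simp add: abs_le_iff) (smt (verit))
  qed
qed

theorem mainTheorem5:
  fixes F G :: "real measure" and k :: nat and d :: real
  assumes "nonneg_distribution F" and "nonneg_distribution G"
    and "\<forall>x. measure F {x<..} > 0"
    and "k \<ge> 1" and "long_tailed (conv_pow G k)"
    and "d > 0"
  shows "(\<lambda>x. tail G (x / d) - tail G ((x + 1) / d))
           \<in> o[at_top](\<lambda>x. tail (prod_distribution F G) x)"
proof -
  have rF: "real_distribution F" and rG: "real_distribution G"
    using assms(1,2) by (auto simp: nonneg_distribution_def)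
  define S where "S = conv_pow G k"
  define T where "T = conv_pow G (k - 1)"
  have ST: "S = convolution G T"
    using assms(4) unfolding S_def T_def by (cases k) auto
  have rS: "real_distribution S" and rT: "real_distribution T"
    unfolding S_def T_def using rG by (auto intro: rd_conv_pow)
  obtain a where a0: "a \<ge> 0" and pa: "measure T {-a..a} > 0"
    using exists_pos_interval[OF rT] by auto
  define pa where "pa = measure T {-a..a}"
  define c where "c = real k * d"
  have c0: "c > 0" using assms(4,6) by (simp add: c_def)
  define q where "q = measure F {c<..}"
  have q0: "q > 0" using assms(3) by (simp add: q_def)
  have pa0: "pa > 0" using pa by (simp add: pa_def)
  have k0: "real k > 0" using assms(4) by simp
  show ?thesis
  proof (rule landau_o.smallI)
    fix e :: real assume e: "e > 0"
    define e' where "e' = e * pa * q / real k"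
    have e'0: "e' > 0" using e pa0 q0 k0 by (simp add: e'_def)
    have ev: "eventually (\<lambda>y. tail S (y - a) - tail S (y + (1/d + a)) \<le> e' * tail S y) at_top"
      using lt_diff[OF _ rS e'0] assms(5) by (simp add: S_def)
    then obtain N where N: "\<And>y. y \<ge> N \<Longrightarrow> tail S (y - a) - tail S (y + (1/d + a)) \<le> e' * tail S y"
      by (auto simp: eventually_at_top_linorder)
    show "eventually (\<lambda>x. norm (tail G (x / d) - tail G ((x + 1) / d))
        \<le> e * norm (tail (prod_distribution F G) x)) at_top"
      using eventually_ge_at_top[of "max (N * d) 1"]
    proof (rule eventually_mono)
      fix x assume x: "max (N * d) 1 \<le> x"
      define y where "y = x / d"
      have yN: "y \<ge> N" using x assms(6) by (simp add: y_def field_simps)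
      have x0: "x > 0" using x by simp
      have hd: "(x + 1) / d = y + 1/d" by (simp add: y_def add_divide_distrib)
      have diff: "tail G (x / d) - tail G ((x + 1) / d) = measure G {y<..y + 1/d}"
        unfolding hd y_def[symmetric] using assms(6) by (intro tail_diff rG) simp
      have diff0: "measure G {y<..y + 1/d} \<ge> 0" by simp
      have "measure G {y<..y + 1/d} * pa \<le> measure S {y - a<..y + 1/d + a}"
        unfolding pa_def ST using conv_lower[OF rG rT, of "1/d" a y] assms(6) a0 by simp
      also have "\<dots> = tail S (y - a) - tail S (y + (1/d + a))"
        using tail_diff[OF rS, of "y - a" "y + (1/d + a)"] assms(6) a0 by (simp add: add.assoc)
      also have "\<dots> \<le> e' * tail S y" using N[OF yN] .
      also have "\<dots> \<le> e' * (real k * tail G (x / c))"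
      proof -
        have "tail S y = tail S (real k * (x / c))"
          using k0 assms(6) by (simp add: c_def y_def)
        also have "\<dots> \<le> real k * tail G (x / c)"
          unfolding S_def by (rule conv_pow_tail[OF rG])
        finally show ?thesis using e'0 by simp
      qed
      also have "\<dots> = e * pa * (q * tail G (x / c))" using k0 by (simp add: e'_def)
      also have "\<dots> \<le> e * pa * tail (prod_distribution F G) x"
        using H_lower[OF rF rG c0 x0] e pa0 unfolding q_def by simp
      finally have "measure G {y<..y + 1/d} \<le> e * tail (prod_distribution F G) x"
        using pa0 by (simp add: mult.commute mult.left_commute)
      moreover have "tail (prod_distribution F G) x \<ge> 0"
        using tail_eq[OF times_measure(1)[OF rF rG borel_open[OF open_greaterThan]]] by simp
      ultimately show "norm (tail G (x / d) - tail G ((x + 1) / d))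
        \<le> e * norm (tail (prod_distribution F G) x)"
        using diff diff0 by simp
    qed
  qed
qed

end
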